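(* Let $1\le k\le d$ and let $\mu$ be a probability distribution on $Q_d$ with $w_i^0\ge \frac34-\frac1{4k}$ for all $i\in[d]$. Then $(\mathbf 0,\mathbf 0)$ is a $k$-local equilibrium.
   Context: $Q_d=\{0,1\}^d$ with the Hamming distance $d(X,Y)=|\{i: x_i\neq y_i\}|$. A probability distribution on $Q_d$ is a function $\mu:Q_d\to\mathbb R_{\ge0}$ with $\sum_{V\in Q_d}\mu(V)=1$, extended to subsets by $\mu(\mathcal A)=\sum_{V\in\mathcal A}\mu(V)$. For $A,B\in Q_d$ let $V(A,B)=\{X\in Q_d: d(X,A)<d(X,B)\}$ and $T(A,B)=\{X\in Q_d: d(X,A)=d(X,B)\}$. The payoffs in position $(A,B)$ are $P_1(A,B)=\mu(V(A,B))+\frac12\mu(T(A,B))$ and $P_2(A,B)=\mu(V(B,A))+\frac12\mu(T(A,B))$. The pair $(A,B)$ is a $k$-local equilibrium if $P_1(A,B)\ge P_1(A',B)$ for all $A'\in Q_d$ with $d(A,A')\le k$ and $P_2(A,B)\ge P_2(A,B')$ for all $B'\in Q_d$ with $d(B,B')\le k$. For $i\in[d]$, $w_i^0=\mu(\{X\in Q_d: x_i=0\})$. $\mathbf 0=(0,\dots,0)$. *)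

theory Defs
  imports Main "HOL-Library.Multiset" Complex_Main
begin

text \<open>Points of Q_d are boolean lists of length d (False = 0, True = 1); coordinates are indexed 0..d-1.\<close>

definition cube :: "nat \<Rightarrow> bool list set" where
  "cube d = {xs. length xs = d}"

definition hamming :: "bool list \<Rightarrow> bool list \<Rightarrow> nat" where
  "hamming xs ys = card {i. i < length xs \<and> xs ! i \<noteq> ys ! i}"

definition is_distribution :: "nat \<Rightarrow> (bool list \<Rightarrow> real) \<Rightarrow> bool" where
  "is_distribution d \<mu> \<longleftrightarrow> (\<forall>v\<in>cube d. \<mu> v \<ge> 0) \<and> (\<Sum>v\<in>cube d. \<mu> v) = 1"

definition measure_of :: "(bool list \<Rightarrow> real) \<Rightarrow> bool list set \<Rightarrow> real" where
  "measure_of \<mu> S = (\<Sum>v\<in>S. \<mu> v)"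

definition Vor :: "nat \<Rightarrow> bool list \<Rightarrow> bool list \<Rightarrow> bool list set" where
  "Vor d A B = {X\<in>cube d. hamming X A < hamming X B}"

definition Tie :: "nat \<Rightarrow> bool list \<Rightarrow> bool list \<Rightarrow> bool list set" where
  "Tie d A B = {X\<in>cube d. hamming X A = hamming X B}"

definition payoff1 :: "nat \<Rightarrow> (bool list \<Rightarrow> real) \<Rightarrow> bool list \<Rightarrow> bool list \<Rightarrow> real" where
  "payoff1 d \<mu> A B = measure_of \<mu> (Vor d A B) + measure_of \<mu> (Tie d A B) / 2"

definition payoff2 :: "nat \<Rightarrow> (bool list \<Rightarrow> real) \<Rightarrow> bool list \<Rightarrow> bool list \<Rightarrow> real" where
  "payoff2 d \<mu> A B = measure_of \<mu> (Vor d B A) + measure_of \<mu> (Tie d A B) / 2"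

definition local_equilibrium :: "nat \<Rightarrow> nat \<Rightarrow> (bool list \<Rightarrow> real) \<Rightarrow> bool list \<Rightarrow> bool list \<Rightarrow> bool" where
  "local_equilibrium d k \<mu> A B \<longleftrightarrow>
     (\<forall>A'\<in>cube d. hamming A A' \<le> k \<longrightarrow> payoff1 d \<mu> A B \<ge> payoff1 d \<mu> A' B) \<and>
     (\<forall>B'\<in>cube d. hamming B B' \<le> k \<longrightarrow> payoff2 d \<mu> A B \<ge> payoff2 d \<mu> A B')"

definition w0 :: "nat \<Rightarrow> (bool list \<Rightarrow> real) \<Rightarrow> nat \<Rightarrow> real" where
  "w0 d \<mu> i = measure_of \<mu> {X\<in>cube d. X ! i = False}"

definition zero_pt :: "nat \<Rightarrow> bool list" where
  "zero_pt d = replicate d False"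

end

theory Submission
  imports Defs
begin

lemma fin_cube: "finite (cube d)"
proof -
  have "finite {xs::bool list. set xs \<subseteq> UNIV \<and> length xs = d}"
    by (rule finite_lists_length_eq) simp
  thus ?thesis unfolding cube_def by simp
qed

lemma ham_split:
  fixes T S :: "nat set"
  assumes "finite T" "finite S"
  shows "card ((T - S) \<union> (S - T)) + 2 * card (T \<inter> S) = card T + card S"
proof -
  have "card ((T - S) \<union> (S - T)) = card (T - S) + card (S - T)"
    by (rule card_Un_disjoint) (use assms in auto)
  moreover have "card (T - S) + card (T \<inter> S) = card T"
    using assms by (metis card_Diff_subset_Int Int_lower1 card_mono finite_Int le_add_diff_inverse2 card_Diff_subset Diff_Int2)
  moreover have "card (S - T) + card (T \<inter> S) = card S"
    using assms by (metis card_Diff_subset_Int Int_lower2 card_mono finite_Int le_add_diff_inverse2 card_Diff_subset Int_commute Diff_Int2)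
  ultimately show ?thesis by linarith
qed

lemma payoff_self: assumes "is_distribution d \<mu>" and "A \<in> cube d"
  shows "payoff1 d \<mu> A A = 1/2"
proof -
  have "Vor d A A = {}" unfolding Vor_def by auto
  moreover have "Tie d A A = cube d" unfolding Tie_def by auto
  ultimately show ?thesis using assms unfolding payoff1_def measure_of_def is_distribution_def by simp
qed

lemma key:
  fixes d k :: nat and \<mu> :: "bool list \<Rightarrow> real"
  assumes k1: "1 \<le> k" and dist: "is_distribution d \<mu>"
    and w: "\<forall>i<d. w0 d \<mu> i \<ge> 3/4 - 1 / (4 * real k)"
    and A: "A \<in> cube d" and hk: "hamming (zero_pt d) A \<le> k"
  shows "payoff1 d \<mu> A (zero_pt d) \<le> 1/2"
proof -
  define Z where "Z = zero_pt d"
  have Zc: "Z \<in> cube d" unfolding Z_def zero_pt_def cube_def by simp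
  have lA: "length A = d" using A unfolding cube_def by simp
  define S where "S = {i. i < d \<and> A ! i}"
  define m where "m = card S"
  have finS: "finite S" unfolding S_def by simp
  have hm: "hamming Z A = m" unfolding hamming_def Z_def zero_pt_def m_def S_def
    by (rule arg_cong[where f=card]) auto
  have mk: "m \<le> k" using hk hm Z_def by simp
  show ?thesis
  proof (cases "m = 0")
    case True
    have "S = {}" using True finS m_def by simp
    hence "A = Z" using lA unfolding S_def Z_def zero_pt_def
      by (intro nth_equalityI) auto
    thus ?thesis using payoff_self[OF dist Zc] Z_def by simp
  next
    case False
    hence m1: "m \<ge> 1" by simp
    define T where "T X = {i. i < d \<and> X ! i}" for X :: "bool list"
    define a where "a X = card (T X \<inter> S)" for X
    have finT: "finite (T X)" for X unfolding T_def by simp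
    have hXA: "hamming X A + 2 * a X = card (T X) + m" if "X \<in> cube d" for X
    proof -
      have "length X = d" using that unfolding cube_def by simp
      hence "{i. i < length X \<and> X ! i \<noteq> A ! i} = (T X - S) \<union> (S - T X)"
        unfolding T_def S_def by auto
      thus ?thesis unfolding hamming_def a_def m_def using ham_split[OF finT finS] by simp
    qed
    have hXZ: "hamming X Z = card (T X)" if "X \<in> cube d" for X
    proof -
      have "length X = d" using that unfolding cube_def by simp
      thus ?thesis unfolding hamming_def T_def Z_def zero_pt_def
        by (intro arg_cong[where f=card]) auto
    qed
    have V: "Vor d A Z = {X\<in>cube d. m < 2 * a X}"
      unfolding Vor_def using hXA hXZ by (auto; (drule hXA, drule hXZ)?; fastforce)
    have Ti: "Tie d A Z = {X\<in>cube d. m = 2 * a X}"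
      unfolding Tie_def using hXA hXZ by (auto; (drule hXA, drule hXZ)?; fastforce)
    have fc: "finite (cube d)" by (rule fin_cube)
    have mu0: "\<And>X. X \<in> cube d \<Longrightarrow> \<mu> X \<ge> 0" and mu1: "(\<Sum>X\<in>cube d. \<mu> X) = 1"
      using dist unfolding is_distribution_def by auto
    define g where "g X = (if m < 2 * a X then 1 else if m = 2 * a X then 1/2 else (0::real))" for X
    have P: "payoff1 d \<mu> A Z = (\<Sum>X\<in>cube d. \<mu> X * g X)"
    proof -
      have "payoff1 d \<mu> A Z = (\<Sum>X\<in>cube d. if m < 2 * a X then \<mu> X else 0)
              + (\<Sum>X\<in>cube d. if m = 2 * a X then \<mu> X else 0) / 2"
        unfolding payoff1_def measure_of_def V Ti using fc by (simp add: sum.inter_filter)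
      also have "\<dots> = (\<Sum>X\<in>cube d. \<mu> X * g X)"
        unfolding g_def sum_divide_distrib sum.distrib[symmetric] by (rule sum.cong) auto
      finally show ?thesis .
    qed
    have gb: "g X \<le> 2 * real (a X) / (real m + 1)" for X
    proof -
      have "m < 2 * a X \<Longrightarrow> real m + 1 \<le> 2 * real (a X)" by linarith
      moreover have "m = 2 * a X \<Longrightarrow> real m + 1 \<le> 2 * (2 * real (a X))" using m1 by linarith
      ultimately show ?thesis unfolding g_def by (auto simp: field_simps)
    qed
    have aS: "real (a X) = (\<Sum>i\<in>S. if X ! i then 1 else 0)" for X
    proof -
      have "T X \<inter> S = {i\<in>S. X ! i}" unfolding T_def S_def by auto
      thus ?thesis unfolding a_def using finS by (simp add: sum.inter_filter[symmetric])
    qed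
    have col: "(\<Sum>X\<in>cube d. if X ! i then \<mu> X else 0) \<le> 1/4 + 1/(4 * real k)" if "i \<in> S" for i
    proof -
      have "i < d" using that S_def by simp
      hence "w0 d \<mu> i \<ge> 3/4 - 1 / (4 * real k)" using w by simp
      moreover have "w0 d \<mu> i = (\<Sum>X\<in>cube d. if \<not> X ! i then \<mu> X else 0)"
        unfolding w0_def measure_of_def using fc by (simp add: sum.inter_filter)
      moreover have "(\<Sum>X\<in>cube d. if X ! i then \<mu> X else 0) + (\<Sum>X\<in>cube d. if \<not> X ! i then \<mu> X else 0) = 1"
        unfolding mu1[symmetric] sum.distrib[symmetric] by (rule sum.cong) auto
      ultimately show ?thesis by linarith
    qed
    have "(\<Sum>X\<in>cube d. \<mu> X * g X) \<le> (\<Sum>X\<in>cube d. \<mu> X * (2 * real (a X) / (real m + 1)))"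
      by (rule sum_mono, rule mult_left_mono[OF gb mu0])
    also have "\<dots> = 2 / (real m + 1) * (\<Sum>X\<in>cube d. \<mu> X * real (a X))"
      by (simp add: sum_distrib_left field_simps)
    also have "(\<Sum>X\<in>cube d. \<mu> X * real (a X)) = (\<Sum>i\<in>S. \<Sum>X\<in>cube d. if X ! i then \<mu> X else 0)"
      unfolding aS by (simp add: sum_distrib_left sum.swap[of _ S] if_distrib cong: if_cong)
    also have "\<dots> \<le> (\<Sum>i\<in>S. 1/4 + 1/(4 * real k))" by (rule sum_mono, rule col)
    also have "\<dots> = real m * (1/4 + 1/(4 * real k))" unfolding m_def by simp
    finally have "payoff1 d \<mu> A Z \<le> 2 / (real m + 1) * (real m * (1/4 + 1/(4 * real k)))"
      using P by (simp add: divide_right_mono)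
    also have "\<dots> \<le> 1/2"
    proof -
      define x where "x = real m"
      define y where "y = real k"
      have y0: "y > 0" "y \<noteq> 0" using k1 y_def by auto
      have x0: "x + 1 > 0" using x_def by simp
      have xy: "x * (y + 1) \<le> (x + 1) * y" using mk x_def y_def by (simp add: algebra_simps)
      have e1: "1/4 + 1/(4*y) = (y+1)/(4*y)" using y0 by (simp add: field_simps)
      have e2: "2/(x+1)*(x*((y+1)/(4*y))) = (x*(y+1))/(2*((x+1)*y))" by simp
      have p: "2*((x+1)*y) > 0" using x0 y0 by simp
      have "(x*(y+1))/(2*((x+1)*y)) \<le> 1/2" using p xy by (simp add: divide_le_eq mult.commute)
      thus ?thesis unfolding x_def[symmetric] y_def[symmetric] e1 e2 .
    qed
    finally show ?thesis unfolding Z_def .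
  qed
qed


lemma payoff2_eq: "payoff2 d \<mu> A B = payoff1 d \<mu> B A"
proof -
  have "Tie d A B = Tie d B A" unfolding Tie_def by auto
  thus ?thesis unfolding payoff1_def payoff2_def by simp
qed

theorem mainTheorem4:
  fixes d k :: nat and \<mu> :: "bool list \<Rightarrow> real"
  assumes "1 \<le> k" and "k \<le> d"
    and "is_distribution d \<mu>"
    and "\<forall>i<d. w0 d \<mu> i \<ge> 3/4 - 1 / (4 * real k)"
  shows "local_equilibrium d k \<mu> (zero_pt d) (zero_pt d)"
proof -
  have Zc: "zero_pt d \<in> cube d" unfolding zero_pt_def cube_def by simp
  have s: "payoff1 d \<mu> (zero_pt d) (zero_pt d) = 1/2" by (rule payoff_self[OF assms(3) Zc])
  show ?thesis unfolding local_equilibrium_def payoff2_eq s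
    using key[OF assms(1) assms(3) assms(4)] by auto
qed

end
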